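(* Each $p\in\mathcal P_{\underline b}$ has a unique decomposition $(q_1,\dots,q_b)$.
   Context: $I=[-1,1]$, $\underline b=(\ell_1,\dots,\ell_b)$ a vector of positive even integers. $\mathcal P_{\underline b}$ is the set of polynomials $p:I\to I$ of the form $p=q_b\circ\dots\circ q_1$, where each $q_i:I\to I$ satisfies $q_i(-1)=q_i(1)=-1$, $q_i(0)>0$ for $i\ne b$, and $q_i=A_i^{-1}\circ p_i\circ A_i$ with $p_i(z)=z^{\ell_i}+a_i$ a real polynomial having an invariant interval $J_i$ and $A_i:I\to J_i$ an affine bijection. Such a vector $(q_1,\dots,q_b)$ is called a decomposition of $p$. *)

theory Defs
  imports Complex_Main "HOL-Computational_Algebra.Polynomial"
begin

abbreviation II :: "real set" where "II \<equiv> {-1..1}"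

definition affine_bij_onto :: "(real \<Rightarrow> real) \<Rightarrow> real set \<Rightarrow> bool" where
  "affine_bij_onto A J \<longleftrightarrow>
     (\<exists>\<alpha> \<beta>. \<alpha> \<noteq> 0 \<and> A = (\<lambda>x. \<alpha> * x + \<beta>)) \<and> A ` II = J"

definition unimodal_factor :: "nat \<Rightarrow> real poly \<Rightarrow> bool" where
  "unimodal_factor l q \<longleftrightarrow>
     (\<exists>a c d A. c < d \<and>
        (\<lambda>z. z ^ l + a) ` {c..d} \<subseteq> {c..d} \<and>
        affine_bij_onto A {c..d} \<and>
        (\<forall>x\<in>II. A (poly q x) = (A x) ^ l + a))"

text \<open>Composition q_b o ... o q_1 of a list [q_1,...,q_b], as a function.\<close>
definition comp_list :: "real poly list \<Rightarrow> real \<Rightarrow> real" where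
  "comp_list qs x = foldl (\<lambda>y q. poly q y) x qs"

text \<open>(q_1,...,q_b) is a decomposition of p with respect to bv = (l_1,...,l_b)
  (0-based indices in the list).\<close>
definition decomposition :: "nat list \<Rightarrow> real poly \<Rightarrow> real poly list \<Rightarrow> bool" where
  "decomposition bv p qs \<longleftrightarrow>
     length qs = length bv \<and>
     (\<forall>i < length qs.
        poly (qs ! i) ` II \<subseteq> II \<and>
        poly (qs ! i) (-1) = -1 \<and> poly (qs ! i) 1 = -1 \<and>
        (i \<noteq> length qs - 1 \<longrightarrow> poly (qs ! i) 0 > 0) \<and>
        unimodal_factor (bv ! i) (qs ! i)) \<and>
     (\<forall>x\<in>II. poly p x = comp_list qs x)"

definition Pclass :: "nat list \<Rightarrow> real poly set" where
  "Pclass bv = {p. poly p ` II \<subseteq> II \<and> (\<exists>qs. decomposition bv p qs)}"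

end

theory Submission
  imports Defs
begin

lemma poly_eq_on_infinite:
  fixes p q :: "real poly"
  assumes "infinite S" "\<forall>x\<in>S. poly p x = poly q x"
  shows "p = q"
proof (rule ccontr)
  assume "p \<noteq> q"
  then have "p - q \<noteq> 0" by simp
  then have "finite {x. poly (p - q) x = 0}" by (rule poly_roots_finite)
  moreover have "S \<subseteq> {x. poly (p - q) x = 0}" using assms(2) by auto
  ultimately show False using assms(1) finite_subset by blast
qed

lemma infinite_II: "infinite II"
  using infinite_Icc[of "-1::real" 1] by simp

lemma comp_list_poly_gen:
  "foldl (\<lambda>y q. poly q y) (poly P x) qs = poly (foldl (\<lambda>P q. q \<circ>\<^sub>p P) P qs) x"
proof (induction qs arbitrary: P)
  case Nil
  then show ?case by simp
next
  case (Cons a qs)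
  have "poly a (poly P x) = poly (a \<circ>\<^sub>p P) x" by (simp add: poly_pcompose)
  then show ?case using Cons.IH[of "a \<circ>\<^sub>p P"] by simp
qed

lemma snoc_all:
  assumes "\<forall>i<length (qs @ [q]). P ((qs @ [q]) ! i)"
  shows "\<forall>i<length qs. P (qs ! i)" "P q"
proof -
  show "\<forall>i<length qs. P (qs ! i)"
  proof (intro allI impI)
    fix i assume "i < length qs"
    then show "P (qs ! i)" using assms[rule_format, of i] by (simp add: nth_append)
  qed
  show "P q" using assms[rule_format, of "length qs"] by simp
qed

lemma comp_list_poly:
  "comp_list qs x = poly (foldl (\<lambda>P q. q \<circ>\<^sub>p P) [:0,1:] qs) x"
  using comp_list_poly_gen[of "[:0,1:]" x qs] by (simp add: comp_list_def)

lemma comp_list_snoc: "comp_list (qs @ [q]) x = poly q (comp_list qs x)"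
  by (simp add: comp_list_def)

lemma comp_list_II:
  assumes "\<forall>i<length qs. poly (qs!i) ` II \<subseteq> II" "x \<in> II"
  shows "comp_list qs x \<in> II"
  using assms
proof (induction qs rule: rev_induct)
  case Nil
  then show ?case by (simp add: comp_list_def)
next
  case (snoc q qs)
  have "\<forall>i<length qs. poly (qs!i) ` II \<subseteq> II"
    using snoc_all(1)[OF snoc.prems(1)] by simp
  then have "comp_list qs x \<in> II" using snoc by blast
  moreover have "poly q ` II \<subseteq> II" using snoc.prems(1)[rule_format, of "length qs"] by simp
  ultimately show ?case unfolding comp_list_snoc by blast
qed

lemma comp_list_one:
  assumes "\<forall>i<length qs. poly (qs!i) 1 = -1 \<and> poly (qs!i) (-1) = -1"
  shows "comp_list qs 1 = (if qs = [] then 1 else -1)"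
  using assms
proof (induction qs rule: rev_induct)
  case Nil
  then show ?case by (simp add: comp_list_def)
next
  case (snoc q qs)
  have "\<forall>i<length qs. poly (qs!i) 1 = -1 \<and> poly (qs!i) (-1) = -1"
    using snoc_all(1)[OF snoc.prems(1)] by simp
  then have "comp_list qs 1 = (if qs = [] then 1 else -1)" using snoc by blast
  moreover have "poly q 1 = -1 \<and> poly q (-1) = -1"
    using snoc.prems(1)[rule_format, of "length qs"] by simp
  ultimately show ?case by (auto simp: comp_list_snoc)
qed

lemma comp_list_zero:
  assumes "\<forall>i<length qs. poly (qs!i) ` II \<subseteq> II \<and> poly (qs!i) 1 = -1 \<and> poly (qs!i) (-1) = -1
      \<and> poly (qs!i) 0 > 0"
  shows "\<exists>x\<in>II. comp_list qs x = 0"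
  using assms
proof (induction qs rule: rev_induct)
  case Nil
  then show ?case by (simp add: comp_list_def)
next
  case (snoc q qs)
  have A: "\<forall>i<length qs. poly (qs!i) ` II \<subseteq> II \<and> poly (qs!i) 1 = -1 \<and> poly (qs!i) (-1) = -1
      \<and> poly (qs!i) 0 > 0"
    using snoc_all(1)[OF snoc.prems(1)] by simp
  then obtain x0 where x0: "x0 \<in> II" "comp_list qs x0 = 0" using snoc by blast
  have q: "poly q 1 = -1" "poly q (-1) = -1" "poly q 0 > 0"
    using snoc.prems(1)[rule_format, of "length qs"] by auto
  have c1: "comp_list qs 1 = 1 \<or> comp_list qs 1 = -1"
    using comp_list_one[of qs] A by auto
  define f where "f = (\<lambda>x. comp_list (qs @ [q]) x)"
  have f1: "f 1 = -1" using c1 q by (auto simp: f_def comp_list_snoc)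
  have fx0: "f x0 > 0" using x0 q by (simp add: f_def comp_list_snoc)
  have cont: "continuous_on {x0..1} f"
    unfolding f_def comp_list_poly by (intro continuous_intros)
  obtain y where "x0 \<le> y" "y \<le> 1" "f y = 0"
    using IVT2'[of f 1 0 x0, OF _ _ _ cont] f1 fx0 x0 by auto
  then show ?case using x0 unfolding f_def by auto
qed


lemma factor_form:
  fixes q :: "real poly"
  assumes l: "l > 0" "even l" and u: "unimodal_factor l q"
    and q1: "poly q 1 = -1" and qm1: "poly q (-1) = -1" and qI: "poly q ` II \<subseteq> II"
  shows "\<exists>c<0. \<forall>x. poly q x = -1 + c * (x ^ l - 1)"
proof -
  obtain a c d A where A: "affine_bij_onto A {c..d}" and eq: "\<forall>x\<in>II. A (poly q x) = (A x) ^ l + a"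
    using u unfolding unimodal_factor_def by blast
  obtain \<alpha> \<beta> where ab: "\<alpha> \<noteq> 0" "A = (\<lambda>x. \<alpha> * x + \<beta>)"
    using A unfolding affine_bij_onto_def by blast
  have e: "\<And>x. x \<in> II \<Longrightarrow> \<alpha> * poly q x + \<beta> = (\<alpha> * x + \<beta>) ^ l + a"
    using eq ab by auto
  have e1: "- \<alpha> + \<beta> = (\<alpha> + \<beta>) ^ l + a" using e[of 1] q1 by simp
  have e2: "- \<alpha> + \<beta> = (\<beta> - \<alpha>) ^ l + a" using e[of "-1"] qm1 by simp
  have "(\<alpha> + \<beta>) ^ l = (\<beta> - \<alpha>) ^ l" using e1 e2 by simp
  then have "\<bar>\<alpha> + \<beta>\<bar> ^ l = \<bar>\<beta> - \<alpha>\<bar> ^ l" by (simp add: power_even_abs l)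
  then have "\<bar>\<alpha> + \<beta>\<bar> = \<bar>\<beta> - \<alpha>\<bar>" using power_eq_iff_eq_base[OF l(1), of "\<bar>\<alpha> + \<beta>\<bar>" "\<bar>\<beta> - \<alpha>\<bar>"] by simp
  then have "(\<alpha> + \<beta>)^2 = (\<beta> - \<alpha>)^2" by (metis power2_abs)
  then have "\<alpha> * \<beta> = 0" by (simp add: power2_eq_square algebra_simps)
  then have b0: "\<beta> = 0" using ab(1) by simp
  have a_eq: "a = - \<alpha> - \<alpha> ^ l" using e1 b0 by simp
  define C where "C = \<alpha> ^ (l - 1)"
  have aC: "\<alpha> ^ l = \<alpha> * C" unfolding C_def using l(1)
    by (metis Suc_diff_1 power_Suc)
  have form: "poly q x = -1 + C * (x ^ l - 1)" if "x \<in> II" for x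
  proof -
    have "\<alpha> * poly q x = (\<alpha> * x) ^ l + a" using e[OF that] b0 by simp
    also have "\<dots> = \<alpha> ^ l * x ^ l - \<alpha> - \<alpha> ^ l" by (simp add: a_eq power_mult_distrib)
    also have "\<dots> = \<alpha> * (-1 + C * (x ^ l - 1))" by (simp add: aC algebra_simps)
    finally show ?thesis using ab(1) by simp
  qed
  define Q where "Q = [:-1 - C:] + monom C l"
  have pQ: "poly Q x = -1 + C * (x ^ l - 1)" for x
    by (simp add: Q_def poly_monom algebra_simps)
  have "q = Q" using poly_eq_on_infinite[OF infinite_II] form pQ by simp
  then have gl: "\<forall>x. poly q x = -1 + C * (x ^ l - 1)" using pQ by simp
  have "(0::real) \<in> II" by simp
  then have "poly q 0 \<in> II" using qI by blast
  moreover have "poly q 0 = -1 - C" using gl l(1) by (simp add: zero_power)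
  ultimately have "C \<le> 0" by simp
  moreover have "C \<noteq> 0" using ab(1) unfolding C_def by simp
  ultimately show ?thesis using gl by (intro exI[of _ C]) auto
qed


definition FF :: "nat \<Rightarrow> real poly \<Rightarrow> bool" where
  "FF l q \<longleftrightarrow> poly q ` II \<subseteq> II \<and> poly q 1 = -1 \<and> poly q (-1) = -1 \<and>
     (\<exists>c<0. \<forall>x. poly q x = -1 + c * (x ^ l - 1))"

lemma uniq:
  assumes "\<forall>l\<in>set bv. l > 0 \<and> even l" "length qs = length bv" "length rs = length bv"
    "\<forall>i<length bv. FF (bv!i) (qs!i) \<and> FF (bv!i) (rs!i)"
    "\<forall>i<length bv - 1. poly (qs!i) 0 > 0 \<and> poly (rs!i) 0 > 0"
    "\<forall>x\<in>II. comp_list qs x = comp_list rs x"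
  shows "qs = rs"
  using assms
proof (induction bv arbitrary: qs rs rule: rev_induct)
  case Nil
  then show ?case by simp
next
  case (snoc l bv)
  obtain qs' q where qs: "qs = qs' @ [q]"
    using snoc.prems(2) by (metis length_0_conv rev_exhaust snoc_eq_iff_butlast)
  obtain rs' r where rs: "rs = rs' @ [r]"
    using snoc.prems(3) by (metis length_0_conv rev_exhaust snoc_eq_iff_butlast)
  have len: "length qs' = length bv" "length rs' = length bv"
    using snoc.prems(2,3) qs rs by auto
  have l: "l > 0" "even l" using snoc.prems(1) by auto
  have Fs: "\<forall>i<length bv. FF (bv!i) (qs'!i) \<and> FF (bv!i) (rs'!i)"
  proof (intro allI impI)
    fix i assume "i < length bv"
    then show "FF (bv!i) (qs'!i) \<and> FF (bv!i) (rs'!i)"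
      using snoc.prems(4)[rule_format, of i] qs rs len by (simp add: nth_append)
  qed
  have Ps: "\<forall>i<length bv. poly (qs'!i) 0 > 0 \<and> poly (rs'!i) 0 > 0"
  proof (intro allI impI)
    fix i assume "i < length bv"
    then show "poly (qs'!i) 0 > 0 \<and> poly (rs'!i) 0 > 0"
      using snoc.prems(5)[rule_format, of i] qs rs len by (simp add: nth_append)
  qed
  have "FF l ((qs' @ [q]) ! length qs')" "FF l ((rs' @ [r]) ! length rs')"
    using snoc.prems(4)[rule_format, of "length bv"] unfolding qs rs len by auto
  then have Fq: "FF l q" "FF l r" by auto
  obtain c where c: "c < 0" "\<And>x. poly q x = -1 + c * (x ^ l - 1)"
    using Fq(1) unfolding FF_def by blast
  obtain d where d: "d < 0" "\<And>x. poly r x = -1 + d * (x ^ l - 1)"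
    using Fq(2) unfolding FF_def by blast
  define R where "R = comp_list qs'"
  define S where "S = comp_list rs'"
  have eqRS: "poly q (R x) = poly r (S x)" if "x \<in> II" for x
    using snoc.prems(6) that unfolding qs rs R_def S_def comp_list_snoc by blast
  have RI: "R x \<in> II" if "x \<in> II" for x
    unfolding R_def using comp_list_II[OF _ that, of qs'] Fs len unfolding FF_def by auto
  have SI: "S x \<in> II" if "x \<in> II" for x
    unfolding S_def using comp_list_II[OF _ that, of rs'] Fs len unfolding FF_def by auto
  obtain x0 where x0: "x0 \<in> II" "R x0 = 0"
    using comp_list_zero[of qs'] Fs Ps len unfolding R_def FF_def by auto
  obtain x1 where x1: "x1 \<in> II" "S x1 = 0"
    using comp_list_zero[of rs'] Fs Ps len unfolding S_def FF_def by auto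
  have powle: "y ^ l \<le> 1" "0 \<le> y ^ l" if "y \<in> II" for y
  proof -
    have "\<bar>y\<bar> ^ l \<le> 1" using that by (intro power_le_one) auto
    then show "y ^ l \<le> 1" by (simp add: power_even_abs l)
    show "0 \<le> y ^ l" using l by (simp add: zero_le_even_power)
  qed
  have "-1 - c \<le> -1 - d"
  proof -
    have "-1 - c = poly q (R x0)" using c l x0 by (simp add: zero_power)
    also have "\<dots> = poly r (S x0)" using eqRS[OF x0(1)] .
    also have "\<dots> = -1 + d * (S x0 ^ l - 1)" using d by simp
    also have "\<dots> \<le> -1 - d"
      using powle[OF SI[OF x0(1)]] d(1) by (simp add: algebra_simps mult_nonpos_nonneg)
    finally show ?thesis .
  qed
  moreover have "-1 - d \<le> -1 - c"
  proof -
    have "-1 - d = poly r (S x1)" using d l x1 by (simp add: zero_power)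
    also have "\<dots> = poly q (R x1)" using eqRS[OF x1(1)] by simp
    also have "\<dots> = -1 + c * (R x1 ^ l - 1)" using c by simp
    also have "\<dots> \<le> -1 - c"
      using powle[OF RI[OF x1(1)]] c(1) by (simp add: algebra_simps mult_nonpos_nonneg)
    finally show ?thesis .
  qed
  ultimately have cd: "c = d" by simp
  have qr: "q = r"
    using c(2) d(2) cd by (metis poly_eq_poly_eq_iff ext)
  have sq: "R x ^ 2 = S x ^ 2" if "x \<in> II" for x
  proof -
    have "R x ^ l = S x ^ l" using eqRS[OF that] c d cd by simp
    then have "\<bar>R x\<bar> ^ l = \<bar>S x\<bar> ^ l" by (simp add: power_even_abs l)
    then have "\<bar>R x\<bar> = \<bar>S x\<bar>"
      using power_eq_iff_eq_base[OF l(1), of "\<bar>R x\<bar>" "\<bar>S x\<bar>"] by simp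
    then show ?thesis by (metis power2_abs)
  qed
  define PR where "PR = foldl (\<lambda>P q. q \<circ>\<^sub>p P) [:0,1:] qs'"
  define PS where "PS = foldl (\<lambda>P q. q \<circ>\<^sub>p P) [:0,1:] rs'"
  have pR: "R x = poly PR x" for x unfolding R_def PR_def by (rule comp_list_poly)
  have pS: "S x = poly PS x" for x unfolding S_def PS_def by (rule comp_list_poly)
  have "PR ^ 2 = PS ^ 2"
    using poly_eq_on_infinite[OF infinite_II] sq by (simp add: pR pS)
  then have "(PR - PS) * (PR + PS) = 0" by (simp add: power2_eq_square algebra_simps)
  then have "PR = PS \<or> PR = - PS" by (simp add: eq_neg_iff_add_eq_0)
  moreover have "R 1 = S 1"
    using comp_list_one[of qs'] comp_list_one[of rs'] Fs len unfolding R_def S_def FF_def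
    by auto
  moreover have "R 1 \<noteq> 0"
    using comp_list_one[of qs'] Fs len unfolding R_def FF_def by auto
  ultimately have "PR = PS" using pR pS by auto
  then have "\<forall>x\<in>II. comp_list qs' x = comp_list rs' x"
    using pR pS unfolding R_def S_def by simp
  then have "qs' = rs'"
    using snoc.IH[of qs' rs'] snoc.prems(1) len Fs Ps by auto
  then show ?case using qs rs qr by simp
qed


lemma decomp_FF:
  assumes "\<forall>l \<in> set bv. l > 0 \<and> even l" "decomposition bv p qs"
  shows "length qs = length bv" "\<forall>i<length bv. FF (bv!i) (qs!i)"
    "\<forall>i<length bv - 1. poly (qs!i) 0 > 0" "\<forall>x\<in>II. comp_list qs x = poly p x"
proof -
  show len: "length qs = length bv" using assms(2) unfolding decomposition_def by simp
  show "\<forall>i<length bv. FF (bv!i) (qs!i)"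
  proof (intro allI impI)
    fix i assume i: "i < length bv"
    then have l: "bv ! i > 0" "even (bv ! i)" using assms(1) nth_mem by blast+
    have h: "poly (qs ! i) ` II \<subseteq> II" "poly (qs ! i) (-1) = -1" "poly (qs ! i) 1 = -1"
      "unimodal_factor (bv ! i) (qs ! i)"
      using assms(2) i len unfolding decomposition_def by auto
    show "FF (bv!i) (qs!i)" unfolding FF_def
      using h factor_form[OF l h(4) h(3) h(2) h(1)] by blast
  qed
  show "\<forall>i<length bv - 1. poly (qs!i) 0 > 0"
    using assms(2) len unfolding decomposition_def by auto
  show "\<forall>x\<in>II. comp_list qs x = poly p x"
    using assms(2) unfolding decomposition_def by auto
qed

theorem lemma4p3:
  fixes bv :: "nat list" and p :: "real poly"
  assumes "\<forall>l \<in> set bv. l > 0 \<and> even l"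
    and "p \<in> Pclass bv"
  shows "\<exists>!qs. decomposition bv p qs"
proof -
  obtain qs where qs: "decomposition bv p qs" using assms(2) unfolding Pclass_def by blast
  show ?thesis
  proof (rule ex1I[of _ qs])
    show "decomposition bv p qs" by (rule qs)
  next
    fix rs assume rs: "decomposition bv p rs"
    note A = decomp_FF[OF assms(1) qs] and B = decomp_FF[OF assms(1) rs]
    show "rs = qs"
      using uniq[OF assms(1) B(1) A(1)] A B by auto
  qed
qed

end
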